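(* Let $0<a<b<1$ with $a+b=1$, let $m\in C^1([0,1])$ be non-constant and $c\in C([0,1])$, and assume (H1), (H2) and $m\in S_{\mathcal{N}}$. Then $\lim_{s\to+\infty}\lambda(s)=\lambda^{\mathcal{N}}$.
   Context: Fix an integer $d\ge1$. $\lambda(s)$ denotes the principal eigenvalue of $-\varphi''-\frac{d-1}{r}\varphi'-2s\,m'(r)\varphi'+c(r)\varphi=\lambda\varphi$ on $(0,1)$, $\varphi'(0)=\varphi'(1)=0$; equivalently $\lambda(s)=\min\{\int_0^1 r^{d-1}e^{2sm}(|\varphi'|^2+c\varphi^2)dr:\ \varphi\in H^1((0,1)),\ \int_0^1 r^{d-1}e^{2sm}\varphi^2dr=1\}$. $\lambda^{\mathcal{D}}$ (resp. $\lambda^{\mathcal{N}}$) is the principal eigenvalue of $-\varphi''-\frac{d-1}{r}\varphi'+c\varphi=\lambda\varphi$ on $(a,b)$ with Dirichlet (resp. Neumann) boundary conditions, i.e. the minimum of $\int_a^b r^{d-1}(|\varphi'|^2+c\varphi^2)dr$ over $\varphi\in H^1_0((a,b))$ (resp. $H^1((a,b))$) with $\int_a^b r^{d-1}\varphi^2dr=1$. (H1): $m(r)=m(1-r)$ on $[0,1]$ and $m\equiv0$ on $[a,b]$, where $a+b=1$. (H2): $c>0$ on $[0,1]$ and $c(r)>\lambda^{\mathcal{D}}$ for $r\in[0,a]\cup[b,1]$. Step function $\bar m$: given $\delta\in(0,a)$, constants $0<h<\alpha<\beta<1<\nu$ and $l\in\mathbb{N}$ with $\sum_{i\ge1}(\alpha^{i+l}+\beta^{i+l})=a-\delta$,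 put $Y_0=\delta$, $Y_n=\delta+\sum_{i=1}^n(\alpha^{i+l}+\beta^{i+l})$ and $X_n=Y_n-\beta^{n+l}$ for $n\ge1$; define $\bar m(r)=h^n$ on $[Y_{n-1},X_n]$ and $\bar m(r)=-\nu h^n$ on $[X_n,Y_n]$ for $n\ge1$ (so on $[\delta,a)$), and $\bar m(r)=\bar m(1-r)$ for $r\in[b,1-\delta]$. $S_{\mathcal{N}}$: the set of $m\in C^1([0,1])$ such that, for some such $\delta,h,\alpha,\beta,\nu,l$, $m'$ changes sign only finitely many times in $[0,\delta)\cup(1-\delta,1]$ and $m(r)\le\bar m(r)$ for all $r\in[\delta,a]\cup[b,1-\delta]$. *)

theory Defs
  imports "HOL-Analysis.Analysis"
begin

text \<open>One-dimensional Sobolev space H^1((x0,x1)): phi is (a representative of) an element of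
  H^1 with weak derivative g iff g is square integrable (hence integrable) on the interval and
  phi(x) = phi(x0) + integral of g over [x0,x]  (absolutely continuous representative).\<close>
definition H1pair :: "real \<Rightarrow> real \<Rightarrow> (real \<Rightarrow> real) \<Rightarrow> (real \<Rightarrow> real) \<Rightarrow> bool" where
  "H1pair x0 x1 phi g \<longleftrightarrow>
     g integrable_on {x0..x1} \<and> (\<lambda>r. (g r)^2) integrable_on {x0..x1} \<and>
     (\<forall>x\<in>{x0..x1}. phi x = phi x0 + integral {x0..x} g)"

definition lambda_s :: "nat \<Rightarrow> (real \<Rightarrow> real) \<Rightarrow> (real \<Rightarrow> real) \<Rightarrow> real \<Rightarrow> real" where
  "lambda_s d m c s = Inf {integral {0..1} (\<lambda>r. r^(d-1) * exp (2 * s * m r) * ((g r)^2 + c r * (phi r)^2))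
      | phi g. H1pair 0 1 phi g \<and>
               integral {0..1} (\<lambda>r. r^(d-1) * exp (2 * s * m r) * (phi r)^2) = 1}"

definition lambdaN :: "nat \<Rightarrow> (real \<Rightarrow> real) \<Rightarrow> real \<Rightarrow> real \<Rightarrow> real" where
  "lambdaN d c a b = Inf {integral {a..b} (\<lambda>r. r^(d-1) * ((g r)^2 + c r * (phi r)^2))
      | phi g. H1pair a b phi g \<and> integral {a..b} (\<lambda>r. r^(d-1) * (phi r)^2) = 1}"

definition lambdaD :: "nat \<Rightarrow> (real \<Rightarrow> real) \<Rightarrow> real \<Rightarrow> real \<Rightarrow> real" where
  "lambdaD d c a b = Inf {integral {a..b} (\<lambda>r. r^(d-1) * ((g r)^2 + c r * (phi r)^2))
      | phi g. H1pair a b phi g \<and> phi a = 0 \<and> phi b = 0 \<and>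
               integral {a..b} (\<lambda>r. r^(d-1) * (phi r)^2) = 1}"

definition finite_sign_changes :: "(real \<Rightarrow> real) \<Rightarrow> real set \<Rightarrow> bool" where
  "finite_sign_changes f A \<longleftrightarrow>
     (\<exists>P. finite P \<and> (\<forall>x y. x \<le> y \<and> {x..y} \<subseteq> A \<and> {x..y} \<inter> P = {} \<longrightarrow> f x * f y \<ge> 0))"

definition Yseq :: "real \<Rightarrow> real \<Rightarrow> real \<Rightarrow> nat \<Rightarrow> nat \<Rightarrow> real" where
  "Yseq \<delta> \<alpha> \<beta> l n = \<delta> + (\<Sum>i=1..n. \<alpha>^(i+l) + \<beta>^(i+l))"

definition Xseq :: "real \<Rightarrow> real \<Rightarrow> real \<Rightarrow> nat \<Rightarrow> nat \<Rightarrow> real" where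
  "Xseq \<delta> \<alpha> \<beta> l n = Yseq \<delta> \<alpha> \<beta> l n - \<beta>^(n+l)"

text \<open>Membership in S_N (m' is the derivative of m).  The condition m \<le> bar m on [delta,a] and on
  [b,1-delta] (where bar m(r) = bar m(1-r)) is written out piecewise.\<close>
definition in_SN :: "(real \<Rightarrow> real) \<Rightarrow> (real \<Rightarrow> real) \<Rightarrow> real \<Rightarrow> bool" where
  "in_SN m m' a \<longleftrightarrow>
    (\<exists>\<delta> h \<alpha> \<beta> \<nu> (l::nat).
       0 < \<delta> \<and> \<delta> < a \<and> 0 < h \<and> h < \<alpha> \<and> \<alpha> < \<beta> \<and> \<beta> < 1 \<and> 1 < \<nu> \<and>
       (\<Sum>i. \<alpha>^(i+1+l) + \<beta>^(i+1+l)) = a - \<delta> \<and>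
       finite_sign_changes m' ({0..<\<delta>} \<union> {1-\<delta><..1}) \<and>
       (\<forall>n\<ge>1. \<forall>r\<in>{Yseq \<delta> \<alpha> \<beta> l (n-1) .. Xseq \<delta> \<alpha> \<beta> l n}.
            m r \<le> h^n \<and> m (1-r) \<le> h^n) \<and>
       (\<forall>n\<ge>1. \<forall>r\<in>{Xseq \<delta> \<alpha> \<beta> l n .. Yseq \<delta> \<alpha> \<beta> l n}.
            m r \<le> - \<nu> * h^n \<and> m (1-r) \<le> - \<nu> * h^n))"

end

theory Submission
  imports Defs
begin


lemma H1D:
  assumes "H1pair x0 x1 phi g"
  shows "g integrable_on {x0..x1}" "(\<lambda>r. (g r)^2) integrable_on {x0..x1}"
    "\<And>x. x \<in> {x0..x1} \<Longrightarrow> phi x = phi x0 + integral {x0..x} g"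
  using assms unfolding H1pair_def by blast+

lemma H1_cont:
  assumes "H1pair x0 x1 phi g"
  shows "continuous_on {x0..x1} phi"
proof -
  have gi: "g integrable_on {x0..x1}" using assms unfolding H1pair_def by blast
  have "continuous_on {x0..x1} (\<lambda>x. phi x0 + integral {x0..x} g)"
    by (rule continuous_on_add[OF continuous_on_const indefinite_integral_continuous_1[OF gi]])
  then show ?thesis
    by (rule continuous_on_eq) (use assms in \<open>unfold H1pair_def, metis\<close>)
qed

lemma cont_times_int:
  fixes w f :: "real \<Rightarrow> real"
  assumes "continuous_on {p..q} w" "f integrable_on {p..q}" "\<And>x. x \<in> {p..q} \<Longrightarrow> 0 \<le> f x"
  shows "(\<lambda>x. w x * f x) integrable_on {p..q}"
proof -
  have "(\<lambda>x. w x * f x) absolutely_integrable_on {p..q}"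
  proof (rule absolutely_integrable_bounded_measurable_product_real)
    show "w \<in> borel_measurable (lebesgue_on {p..q})"
      using assms(1) by (intro continuous_imp_measurable_on_sets_lebesgue) auto
    show "{p..q} \<in> sets lebesgue" by auto
    show "bounded (w ` {p..q})"
      using assms(1) by (intro compact_imp_bounded compact_continuous_image) auto
    show "f absolutely_integrable_on {p..q}"
      using assms by (intro nonnegative_absolutely_integrable_1) auto
  qed
  then show ?thesis by (rule set_lebesgue_integral_eq_integral(1))
qed

lemma H1_int:
  assumes "H1pair x0 x1 phi g" "continuous_on {x0..x1} W" "continuous_on {x0..x1} c"
  shows "(\<lambda>r. W r * (phi r)^2) integrable_on {x0..x1}"
    "(\<lambda>r. W r * ((g r)^2 + c r * (phi r)^2)) integrable_on {x0..x1}"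
proof -
  have pc: "continuous_on {x0..x1} phi" using H1_cont[OF assms(1)] .
  show 1: "(\<lambda>r. W r * (phi r)^2) integrable_on {x0..x1}"
    by (intro integrable_continuous_interval continuous_intros assms pc)
  have a: "(\<lambda>r. W r * (g r)^2) integrable_on {x0..x1}"
    using cont_times_int[of x0 x1 W "\<lambda>r. (g r)^2", OF assms(2) H1D(2)[OF assms(1)]] by simp
  have b: "(\<lambda>r. W r * c r * (phi r)^2) integrable_on {x0..x1}"
    by (intro integrable_continuous_interval continuous_intros assms pc)
  have "(\<lambda>r. W r * (g r)^2 + W r * c r * (phi r)^2) integrable_on {x0..x1}"
    by (rule integrable_add[OF a b])
  then show "(\<lambda>r. W r * ((g r)^2 + c r * (phi r)^2)) integrable_on {x0..x1}"
    by (simp add: algebra_simps)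
qed

definition RS :: "real \<Rightarrow> real \<Rightarrow> (real \<Rightarrow> real) \<Rightarrow> (real \<Rightarrow> real) \<Rightarrow> real set" where
  "RS x0 x1 W c = {integral {x0..x1} (\<lambda>r. W r * ((g r)^2 + c r * (phi r)^2))
      | phi g. H1pair x0 x1 phi g \<and> integral {x0..x1} (\<lambda>r. W r * (phi r)^2) = 1}"

lemma lambda_s_RS: "lambda_s d m c s = Inf (RS 0 1 (\<lambda>r. r^(d-1) * exp (2 * s * m r)) c)"
  unfolding lambda_s_def RS_def by (rule refl)

lemma lambdaN_RS: "lambdaN d c a b = Inf (RS a b (\<lambda>r. r^(d-1)) c)"
  unfolding lambdaN_def RS_def by (rule refl)

lemma integral_nonneg_any:
  fixes f :: "real \<Rightarrow> real"
  assumes "\<And>x. x \<in> S \<Longrightarrow> 0 \<le> f x"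
  shows "0 \<le> integral S f"
  proof (cases "f integrable_on S")
  case True then show ?thesis using assms by (rule integral_nonneg)
next
  case False then show ?thesis by (simp add: not_integrable_integral)
qed

lemma RS_nonneg:
  assumes "\<And>r. r \<in> {x0..x1} \<Longrightarrow> 0 \<le> W r" "\<And>r. r \<in> {x0..x1} \<Longrightarrow> 0 \<le> c r"
  shows "\<forall>v\<in>RS x0 x1 W c. 0 \<le> v"
proof
  fix v assume "v \<in> RS x0 x1 W c"
  then obtain phi g where v: "v = integral {x0..x1} (\<lambda>r. W r * ((g r)^2 + c r * (phi r)^2))"
    unfolding RS_def by blast
  show "0 \<le> v" unfolding v
    by (rule integral_nonneg_any) (use assms in \<open>simp add: mult_nonneg_nonneg\<close>)
qed

lemma RS_bdd:
  assumes "\<And>r. r \<in> {x0..x1} \<Longrightarrow> 0 \<le> W r" "\<And>r. r \<in> {x0..x1} \<Longrightarrow> 0 \<le> c r"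
  shows "bdd_below (RS x0 x1 W c)"
  using RS_nonneg[OF assms] by (intro bdd_belowI[of _ 0]) auto

lemma integral_div_real:
  fixes f :: "real \<Rightarrow> real"
  shows "integral S (\<lambda>x. f x / k) = integral S f / k"
  using integral_cmul[of S "1/k" f] by (simp add: divide_inverse mult.commute)

lemma H1_scale:
  assumes "H1pair x0 x1 phi g"
  shows "H1pair x0 x1 (\<lambda>r. phi r / k) (\<lambda>r. g r / k)"
proof (cases "k = 0")
  case True
  then show ?thesis by (simp add: H1pair_def integrable_0)
next
  case False
  have "(\<lambda>r. (g r / k)^2) = (\<lambda>r. (g r)^2 / k^2)" by (simp add: power_divide)
  show ?thesis unfolding H1pair_def
  proof (intro conjI ballI)
    show "(\<lambda>r. g r / k) integrable_on {x0..x1}" using H1D(1)[OF assms] False by simp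
    show "(\<lambda>r. (g r / k)^2) integrable_on {x0..x1}" using H1D(2)[OF assms] False
      by (simp add: power_divide)
    fix x assume "x \<in> {x0..x1}"
    from H1D(3)[OF assms this] show "phi x / k = phi x0 / k + integral {x0..x} (\<lambda>r. g r / k)"
      by (simp add: integral_div_real add_divide_distrib)
  qed
qed

lemma RS_mem:
  assumes "H1pair x0 x1 phi g" "continuous_on {x0..x1} W" "continuous_on {x0..x1} c"
    and D: "integral {x0..x1} (\<lambda>r. W r * (phi r)^2) = D" "D > 0"
  shows "integral {x0..x1} (\<lambda>r. W r * ((g r)^2 + c r * (phi r)^2)) / D \<in> RS x0 x1 W c"
proof -
  let ?k = "sqrt D"
  have k2: "?k^2 = D" using D by simp
  have e1: "(\<lambda>r. W r * ((phi r / ?k)^2)) = (\<lambda>r. W r * (phi r)^2 / D)"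
    using k2 by (simp add: power_divide)
  have e2: "(\<lambda>r. W r * ((g r / ?k)^2 + c r * (phi r / ?k)^2)) = (\<lambda>r. W r * ((g r)^2 + c r * (phi r)^2) / D)"
    using k2 D(2) by (auto simp: fun_eq_iff power_divide field_simps)
  show ?thesis unfolding RS_def
    apply (rule CollectI)
    apply (rule exI[of _ "\<lambda>r. phi r / ?k"], rule exI[of _ "\<lambda>r. g r / ?k"])
    using H1_scale[OF assms(1)] D by (simp add: e1 e2 integral_div_real)
qed

lemma RS_rayleigh:
  assumes "H1pair x0 x1 phi g" "continuous_on {x0..x1} W" "continuous_on {x0..x1} c"
    and "\<And>r. r \<in> {x0..x1} \<Longrightarrow> 0 \<le> W r" "\<And>r. r \<in> {x0..x1} \<Longrightarrow> 0 \<le> c r"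
  shows "Inf (RS x0 x1 W c) * integral {x0..x1} (\<lambda>r. W r * (phi r)^2)
      \<le> integral {x0..x1} (\<lambda>r. W r * ((g r)^2 + c r * (phi r)^2))"
proof -
  define D where "D = integral {x0..x1} (\<lambda>r. W r * (phi r)^2)"
  define N where "N = integral {x0..x1} (\<lambda>r. W r * ((g r)^2 + c r * (phi r)^2))"
  have D0: "D \<ge> 0" unfolding D_def by (rule integral_nonneg_any) (use assms in simp)
  have N0: "N \<ge> 0" unfolding N_def by (rule integral_nonneg_any) (use assms in simp)
  show ?thesis
  proof (cases "D = 0")
    case True then show ?thesis using N0 by (simp add: D_def[symmetric] N_def[symmetric])
  next
    case False
    then have "D > 0" using D0 by simp
    have "N / D \<in> RS x0 x1 W c" unfolding N_def
      by (rule RS_mem[OF assms(1-3) D_def[symmetric] \<open>D > 0\<close>])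
    then have "Inf (RS x0 x1 W c) \<le> N / D"
      by (intro cInf_lower RS_bdd) (use assms in auto)
    then show ?thesis using \<open>D > 0\<close> by (simp add: D_def[symmetric] N_def[symmetric] pos_le_divide_eq)
  qed
qed


lemma H1_restrict:
  assumes "H1pair x0 x1 phi g" "x0 \<le> p" "p \<le> q" "q \<le> x1"
  shows "H1pair p q phi g"
  unfolding H1pair_def
proof (intro conjI ballI)
  show "g integrable_on {p..q}" using H1D(1)[OF assms(1)] assms
    by (rule_tac integrable_subinterval_real) auto
  show "(\<lambda>r. (g r)^2) integrable_on {p..q}" using H1D(2)[OF assms(1)] assms
    by (rule_tac integrable_subinterval_real) auto
  fix x assume x: "x \<in> {p..q}"
  have gi: "g integrable_on {x0..x}" using H1D(1)[OF assms(1)] assms x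
    by (rule_tac integrable_subinterval_real) auto
  have c: "integral {x0..p} g + integral {p..x} g = integral {x0..x} g"
    by (rule Henstock_Kurzweil_Integration.integral_combine) (use x assms gi in auto)
  have e1: "phi x = phi x0 + integral {x0..x} g" by (rule H1D(3)[OF assms(1)]) (use x assms in auto)
  have e2: "phi p = phi x0 + integral {x0..p} g" by (rule H1D(3)[OF assms(1)]) (use x assms in auto)
  show "phi x = phi p + integral {p..x} g" using e1 e2 c by linarith
qed

lemma pos_integral_cont:
  fixes f :: "real \<Rightarrow> real"
  assumes "continuous_on {p..q} f" "\<And>x. x \<in> {p..q} \<Longrightarrow> 0 \<le> f x" "y \<in> {p..q}" "f y > 0" "p < q"
  shows "integral {p..q} f > 0"
proof -
  have i: "(f has_integral integral {p..q} f) {p..q}"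
    using assms(1) integrable_continuous_interval by blast
  have "integral {p..q} f \<ge> 0" using i assms(2) by (rule has_integral_nonneg)
  moreover have "integral {p..q} f \<noteq> 0"
  proof
    assume z: "integral {p..q} f = 0"
    have "f y = 0"
      using has_integral_0_cbox_imp_0[of p q f y] assms i z by auto
    then show False using assms(4) by simp
  qed
  ultimately show ?thesis by simp
qed

definition DS :: "nat \<Rightarrow> (real \<Rightarrow> real) \<Rightarrow> real \<Rightarrow> real \<Rightarrow> real set" where
  "DS d c a b = {integral {a..b} (\<lambda>r. r^(d-1) * ((g r)^2 + c r * (phi r)^2))
      | phi g. H1pair a b phi g \<and> phi a = 0 \<and> phi b = 0 \<and>
               integral {a..b} (\<lambda>r. r^(d-1) * (phi r)^2) = 1}"

lemma lambdaD_DS: "lambdaD d c a b = Inf (DS d c a b)"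
  unfolding lambdaD_def DS_def by (rule refl)

lemma DS_sub: "DS d c a b \<subseteq> RS a b (\<lambda>r. r^(d-1)) c"
  unfolding DS_def RS_def by blast

lemma DS_ne:
  assumes "0 < a" "a < b"
  shows "DS d c a b \<noteq> {}"
proof -
  define p0 where "p0 = (\<lambda>r::real. (r - a) * (b - r))"
  define g0 where "g0 = (\<lambda>r::real. a + b - 2 * r)"
  have der: "(p0 has_vector_derivative g0 x) (at x within S)" for x S
    unfolding p0_def g0_def has_real_derivative_iff_has_vector_derivative[symmetric]
    by (auto intro!: derivative_eq_intros simp: algebra_simps)
  have H: "H1pair a b p0 g0" unfolding H1pair_def
  proof (intro conjI ballI)
    show "g0 integrable_on {a..b}" unfolding g0_def
      by (intro integrable_continuous_interval continuous_intros)
    show "(\<lambda>r. (g0 r)^2) integrable_on {a..b}" unfolding g0_def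
      by (intro integrable_continuous_interval continuous_intros)
    fix x assume x: "x \<in> {a..b}"
    have "(g0 has_integral (p0 x - p0 a)) {a..x}"
      by (rule fundamental_theorem_of_calculus) (use x der in auto)
    then show "p0 x = p0 a + integral {a..x} g0" by (simp add: integral_unique)
  qed
  define D where "D = integral {a..b} (\<lambda>r. r^(d-1) * (p0 r)^2)"
  have "D > 0" unfolding D_def
  proof (rule pos_integral_cont[where y="(a+b)/2"])
    show "continuous_on {a..b} (\<lambda>r. r^(d-1) * (p0 r)^2)" unfolding p0_def
      by (intro continuous_intros)
    show "0 \<le> r^(d-1) * (p0 r)^2" if "r \<in> {a..b}" for r using that assms by auto
    show "0 < ((a+b)/2)^(d-1) * (p0 ((a+b)/2))^2" unfolding p0_def using assms by auto
  qed (use assms in auto)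
  have Hs: "H1pair a b (\<lambda>r. p0 r / sqrt D) (\<lambda>r. g0 r / sqrt D)" by (rule H1_scale[OF H])
  have "integral {a..b} (\<lambda>r. r^(d-1) * (p0 r / sqrt D)^2) = integral {a..b} (\<lambda>r. r^(d-1) * (p0 r)^2 / D)"
    using \<open>D > 0\<close> by (simp add: power_divide)
  also have "\<dots> = D / D" unfolding D_def by (rule integral_div_real)
  also have "\<dots> = 1" using \<open>D > 0\<close> by simp
  finally have "integral {a..b} (\<lambda>r. r^(d-1) * ((\<lambda>r. p0 r / sqrt D) r)^2) = 1" by simp
  moreover have "(\<lambda>r. p0 r / sqrt D) a = 0" "(\<lambda>r. p0 r / sqrt D) b = 0" unfolding p0_def by auto
  ultimately show ?thesis unfolding DS_def using Hs by blast
qed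

lemma lambdaN_le_D:
  assumes "0 < a" "a < b" "\<And>r. r \<in> {a..b} \<Longrightarrow> 0 \<le> c r"
  shows "lambdaN d c a b \<le> lambdaD d c a b"
  unfolding lambdaN_RS lambdaD_DS
  by (rule cInf_superset_mono[OF DS_ne[OF assms(1,2)] RS_bdd DS_sub]) (use assms in auto)

lemma lower_bound:
  fixes a b s v :: real and d :: nat and m c :: "real \<Rightarrow> real"
  assumes "0 < a" "a < b" "b < 1"
    and cc: "continuous_on {0..1} c" and mc: "continuous_on {0..1} m"
    and cpos: "\<And>r. r \<in> {0..1} \<Longrightarrow> 0 < c r"
    and m0: "\<And>r. r \<in> {a..b} \<Longrightarrow> m r = 0"
    and cL: "\<And>r. r \<in> {0..a} \<union> {b..1} \<Longrightarrow> lambdaN d c a b \<le> c r"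
    and v: "v \<in> RS 0 1 (\<lambda>r. r^(d-1) * exp (2 * s * m r)) c"
  shows "lambdaN d c a b \<le> v"
proof -
  define W where "W = (\<lambda>r::real. r^(d-1) * exp (2 * s * m r))"
  define Lam where "Lam = lambdaN d c a b"
  obtain phi g where H: "H1pair 0 1 phi g"
    and n1: "integral {0..1} (\<lambda>r. W r * (phi r)^2) = 1"
    and vdef: "v = integral {0..1} (\<lambda>r. W r * ((g r)^2 + c r * (phi r)^2))"
    using v unfolding RS_def W_def by blast
  define F where "F = (\<lambda>r. W r * ((g r)^2 + c r * (phi r)^2))"
  define P where "P = (\<lambda>r. W r * (phi r)^2)"
  have Wc: "continuous_on {0..1} W" unfolding W_def by (intro continuous_intros mc)
  have Fi: "F integrable_on {0..1}" unfolding F_def by (rule H1_int(2)[OF H Wc cc])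
  have Pi: "P integrable_on {0..1}" unfolding P_def by (rule H1_int(1)[OF H Wc cc])
  have W0: "0 \<le> W r" if "r \<in> {0..1}" for r using that unfolding W_def by auto
  have sub: "F integrable_on {p..q}" "P integrable_on {p..q}" if "0 \<le> p" "q \<le> 1" for p q
    using integrable_subinterval_real[OF Fi] integrable_subinterval_real[OF Pi] that by auto
  have splitF: "integral {0..1} F = integral {0..a} F + integral {a..b} F + integral {b..1} F"
    using Henstock_Kurzweil_Integration.integral_combine[of 0 a 1 F] Henstock_Kurzweil_Integration.integral_combine[of a b 1 F] sub assms by auto
  have splitP: "integral {0..1} P = integral {0..a} P + integral {a..b} P + integral {b..1} P"
    using Henstock_Kurzweil_Integration.integral_combine[of 0 a 1 P] Henstock_Kurzweil_Integration.integral_combine[of a b 1 P] sub assms by auto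
  have Hab: "H1pair a b phi g" by (rule H1_restrict[OF H]) (use assms in auto)
  have mid1: "integral {a..b} F = integral {a..b} (\<lambda>r. r^(d-1) * ((g r)^2 + c r * (phi r)^2))"
    unfolding F_def W_def by (rule integral_cong) (simp add: m0)
  have mid2: "integral {a..b} P = integral {a..b} (\<lambda>r. r^(d-1) * (phi r)^2)"
    unfolding P_def W_def by (rule integral_cong) (simp add: m0)
  have ray: "Lam * integral {a..b} P \<le> integral {a..b} F"
    unfolding mid1 mid2 Lam_def lambdaN_RS
  proof (rule RS_rayleigh[OF Hab])
    show "continuous_on {a..b} (\<lambda>r. r^(d-1))" by (intro continuous_intros)
    show "continuous_on {a..b} c" using cc assms by (rule_tac continuous_on_subset) auto
    show "0 \<le> c r" if "r \<in> {a..b}" for r by (rule less_imp_le, rule cpos) (use that assms(1,2,3) in auto)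
  qed (use assms in auto)
  have outer: "Lam * integral {p..q} P \<le> integral {p..q} F"
    if "0 \<le> p" "q \<le> 1" "{p..q} \<subseteq> {0..a} \<union> {b..1}" for p q
  proof -
    have "Lam * integral {p..q} P = integral {p..q} (\<lambda>r. Lam * P r)"
      using sub(2)[OF that(1,2)] by (rule integral_mult)
    also have "\<dots> \<le> integral {p..q} F"
    proof (rule integral_le)
      show "(\<lambda>r. Lam * P r) integrable_on {p..q}" using integrable_cmul[OF sub(2)[OF that(1,2)], of Lam] by simp
      show "F integrable_on {p..q}" using sub(1)[OF that(1,2)] .
      fix r assume r: "r \<in> {p..q}"
      then have r01: "r \<in> {0..1}" using that by auto
      have "Lam \<le> c r" unfolding Lam_def using cL r that by auto
      then have "Lam * (phi r)^2 \<le> c r * (phi r)^2" by (simp add: mult_right_mono)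
      also have "\<dots> \<le> (g r)^2 + c r * (phi r)^2" by simp
      finally have "W r * (Lam * (phi r)^2) \<le> W r * ((g r)^2 + c r * (phi r)^2)"
        using W0[OF r01] by (rule mult_left_mono)
      then show "Lam * P r \<le> F r" unfolding P_def F_def by (simp add: algebra_simps)
    qed
    finally show ?thesis .
  qed
  have o1: "Lam * integral {0..a} P \<le> integral {0..a} F" by (rule outer) (use assms in auto)
  have o2: "Lam * integral {b..1} P \<le> integral {b..1} F" by (rule outer) (use assms in auto)
  have "Lam = Lam * integral {0..1} P" using n1 unfolding P_def by simp
  also have "\<dots> = Lam * integral {0..a} P + Lam * integral {a..b} P + Lam * integral {b..1} P"
    unfolding splitP by (simp add: algebra_simps)
  also have "\<dots> \<le> integral {0..1} F" unfolding splitF using o1 o2 ray by linarith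
  finally show ?thesis unfolding Lam_def vdef F_def .
qed




lemma summable_pow_shift:
  fixes x :: real assumes "0 \<le> x" "x < 1"
  shows "summable (\<lambda>i. x^(i+k))"
proof -
  have "summable (\<lambda>i. x^k * x^i)" using assms by (intro summable_mult summable_geometric) auto
  then show ?thesis by (simp add: power_add mult.commute)
qed

lemma suminf_pow_shift:
  fixes x :: real assumes "0 \<le> x" "x < 1"
  shows "(\<Sum>i. x^(i+k)) = x^k / (1 - x)"
proof -
  have g: "summable (\<lambda>i. x^i)" using assms by (intro summable_geometric) auto
  have "(\<Sum>i. x^k * x^i) = x^k * (\<Sum>i. x^i)" by (rule suminf_mult[OF g])
  also have "\<dots> = x^k * (1 / (1 - x))" using assms by (simp add: suminf_geometric)
  finally have "(\<Sum>i. x^k * x^i) = x^k * (1 / (1 - x))" .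
  then show ?thesis by (simp add: power_add mult.commute)
qed

context
  fixes \<delta> \<alpha> \<beta> a :: real and l :: nat
  assumes d0: "0 < \<delta>" and al: "0 < \<alpha>" "\<alpha> < \<beta>" "\<beta> < 1"
    and sumF: "(\<Sum>i. \<alpha>^(i+1+l) + \<beta>^(i+1+l)) = a - \<delta>"
begin

definition "FF i = \<alpha>^(i+1+l) + \<beta>^(i+1+l)"

lemma FF_pos: "FF i > 0" unfolding FF_def using al by (simp add: add_pos_pos)

lemma FF_summable: "summable FF"
  unfolding FF_def using al
  by (intro summable_add summable_pow_shift[where k="1+l", simplified add.assoc]) auto

lemma FF_sum: "suminf FF = a - \<delta>" using sumF unfolding FF_def .

lemma Yseq_eq: "Yseq \<delta> \<alpha> \<beta> l n = \<delta> + (\<Sum>i<n. FF i)"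
proof (induction n)
  case 0 then show ?case by (simp add: Yseq_def)
next
  case (Suc n)
  have "Yseq \<delta> \<alpha> \<beta> l (Suc n) = Yseq \<delta> \<alpha> \<beta> l n + (\<alpha>^(Suc n+l) + \<beta>^(Suc n+l))"
    unfolding Yseq_def by (simp add: sum.cl_ivl_Suc)
  also have "\<dots> = \<delta> + (\<Sum>i<Suc n. FF i)" using Suc by (simp add: FF_def)
  finally show ?case .
qed

lemma Yseq_Suc: "Yseq \<delta> \<alpha> \<beta> l (Suc n) = Yseq \<delta> \<alpha> \<beta> l n + \<alpha>^(Suc n+l) + \<beta>^(Suc n+l)"
  unfolding Yseq_eq by (simp add: FF_def)

lemma tail_eq: "a - Yseq \<delta> \<alpha> \<beta> l n = (\<Sum>i. FF (i + n))"
  using suminf_split_initial_segment[OF FF_summable, of n] FF_sum unfolding Yseq_eq by simp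

lemma Y_lt: "Yseq \<delta> \<alpha> \<beta> l n < a"
proof -
  have "summable (\<lambda>i. FF (i + n))" using FF_summable by (rule summable_ignore_initial_segment)
  then have "0 < (\<Sum>i. FF (i + n))" using FF_pos by (intro suminf_pos) auto
  then show ?thesis using tail_eq[of n] by simp
qed

lemma Y_ge: "\<delta> \<le> Yseq \<delta> \<alpha> \<beta> l n"
  unfolding Yseq_eq using FF_pos by (simp add: sum_nonneg less_imp_le)

lemma Y_mono: "j \<le> k \<Longrightarrow> Yseq \<delta> \<alpha> \<beta> l j \<le> Yseq \<delta> \<alpha> \<beta> l k"
  unfolding Yseq_eq using FF_pos by (intro add_left_mono sum_mono2) (auto simp: less_imp_le)

lemma Y_lim: "(\<lambda>n. Yseq \<delta> \<alpha> \<beta> l n) \<longlonglongrightarrow> a"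
proof -
  have "(\<lambda>n. \<delta> + (\<Sum>i<n. FF i)) \<longlonglongrightarrow> \<delta> + suminf FF"
    by (intro tendsto_intros summable_LIMSEQ FF_summable)
  then show ?thesis unfolding Yseq_eq FF_sum by simp
qed

lemma tail_bound: "a - Yseq \<delta> \<alpha> \<beta> l n \<le> 2 * \<beta>^n / (1 - \<beta>)"
proof -
  have le: "FF (i + n) \<le> 2 * \<beta>^(i+n)" for i
  proof -
    have "\<alpha>^(i+n+1+l) \<le> \<beta>^(i+n+1+l)" using al by (intro power_mono) auto
    moreover have "\<beta>^(i+n+1+l) \<le> \<beta>^(i+n)" using al by (intro power_decreasing) auto
    ultimately show ?thesis unfolding FF_def by (simp add: add.assoc)
  qed
  have s2: "summable (\<lambda>i. 2 * \<beta>^(i+n))" using al by (intro summable_mult summable_pow_shift) auto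
  have "(\<Sum>i. FF (i + n)) \<le> (\<Sum>i. 2 * \<beta>^(i+n))"
    by (rule suminf_le[OF le summable_ignore_initial_segment[OF FF_summable] s2])
  also have "\<dots> = 2 * (\<Sum>i. \<beta>^(i+n))"
    by (rule suminf_mult[OF summable_pow_shift]) (use al in auto)
  also have "\<dots> = 2 * (\<beta>^n / (1 - \<beta>))" using al by (simp add: suminf_pow_shift)
  finally show ?thesis unfolding tail_eq by simp
qed

lemma X_eq: "n \<ge> 1 \<Longrightarrow> Xseq \<delta> \<alpha> \<beta> l n = Yseq \<delta> \<alpha> \<beta> l (n - 1) + \<alpha>^(n+l)"
  using Yseq_Suc[of "n - 1"] unfolding Xseq_def by simp

lemma XY_len: "Yseq \<delta> \<alpha> \<beta> l n - Xseq \<delta> \<alpha> \<beta> l n = \<beta>^(n+l)"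
  unfolding Xseq_def by simp

lemma X_pos: "n \<ge> 1 \<Longrightarrow> 0 < Xseq \<delta> \<alpha> \<beta> l n"
  using X_eq Y_ge[of "n - 1"] d0 al by (smt (verit) zero_less_power)

lemma m_tail:
  fixes m :: "real \<Rightarrow> real" and h \<nu> :: real
  assumes h: "0 < h" "h < 1" and nu: "0 < \<nu>" and ma: "m a \<le> 0"
    and A1: "\<forall>n\<ge>1. \<forall>r\<in>{Yseq \<delta> \<alpha> \<beta> l (n-1) .. Xseq \<delta> \<alpha> \<beta> l n}. m r \<le> h^n"
    and A2: "\<forall>n\<ge>1. \<forall>r\<in>{Xseq \<delta> \<alpha> \<beta> l n .. Yseq \<delta> \<alpha> \<beta> l n}. m r \<le> - \<nu> * h^n"
    and r: "r \<in> {Yseq \<delta> \<alpha> \<beta> l n .. a}"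
  shows "m r \<le> h^(n+1)"
proof (cases "r = a")
  case True then show ?thesis using ma h by (smt (verit) zero_le_power)
next
  case False
  then have ra: "r < a" using r by simp
  have "eventually (\<lambda>j. r < Yseq \<delta> \<alpha> \<beta> l j) sequentially"
    using Y_lim ra by (rule order_tendstoD(1))
  then obtain J where J: "r < Yseq \<delta> \<alpha> \<beta> l J" by (auto simp: eventually_sequentially)
  define j where "j = (LEAST j. r < Yseq \<delta> \<alpha> \<beta> l j)"
  have j1: "r < Yseq \<delta> \<alpha> \<beta> l j" unfolding j_def by (rule LeastI[of _ J]) (rule J)
  have jn: "j > n"
  proof (rule ccontr)
    assume "\<not> n < j"
    then have "Yseq \<delta> \<alpha> \<beta> l j \<le> Yseq \<delta> \<alpha> \<beta> l n" by (intro Y_mono) auto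
    then show False using j1 r by simp
  qed
  define k where "k = j - 1"
  have jk: "j = Suc k" unfolding k_def using jn by simp
  have k1: "\<not> r < Yseq \<delta> \<alpha> \<beta> l k" unfolding k_def j_def
    by (rule not_less_Least) (use jn j_def in auto)
  have kn: "k \<ge> n" using jn jk by simp
  have hp: "h^(Suc k) \<le> h^(n+1)" using h kn by (intro power_decreasing) auto
  show ?thesis
  proof (cases "r \<le> Xseq \<delta> \<alpha> \<beta> l (Suc k)")
    case True
    then have "m r \<le> h^(Suc k)" using A1[rule_format, of "Suc k" r] k1 by simp
    then show ?thesis using hp by simp
  next
    case False
    then have "m r \<le> - \<nu> * h^(Suc k)" using A2[rule_format, of "Suc k" r] j1 jk by simp
    also have "\<dots> \<le> 0" using nu h by simp
    also have "0 \<le> h^(n+1)" using h by simp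
    finally show ?thesis .
  qed
qed

end



lemma asymp:
  fixes h \<beta> \<nu> C K \<epsilon> :: real and l :: nat
  assumes h: "0 < h" "h < 1" and be: "0 < \<beta>" "\<beta> < 1" and nu: "1 < \<nu>"
    and C: "0 \<le> C" and K: "0 \<le> K" and e: "0 < \<epsilon>"
  shows "\<exists>S>0. \<forall>s\<ge>S. \<exists>n\<ge>1. K  *  (exp (-2 * s * \<nu> * h^n)  *  (1/\<beta>^(n+l) + C * \<beta>^(n+l))
            + exp (2 * s * h^(n+1))  *  C  *  (2 * \<beta>^n/(1-\<beta>))) < \<epsilon>"
proof -
  define \<kappa> where "\<kappa> = - ln \<beta>  *  (\<nu>+1)/(4 * \<nu>)"
  have lnb: "ln \<beta> < 0" using be by simp
  have kp: "\<kappa> > 0"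
  proof -
    have "ln \<beta> * (\<nu> + 1) < 0" using lnb nu by (intro mult_neg_pos) auto
    then have "ln \<beta> * (\<nu> + 1) / (4 * \<nu>) < 0" using nu by (intro divide_neg_pos) auto
    then show ?thesis unfolding \<kappa>_def by simp
  qed
  define r1 where "r1 = exp (2 * \<kappa>)  *  \<beta>"
  define r2 where "r2 = exp (-2 * \<nu> * \<kappa>) / \<beta>"
  have bexp: "\<beta> = exp (ln \<beta>)" using be by simp
  have r1e: "r1 = exp (ln \<beta> * (\<nu> - 1) / (2 * \<nu>))"
  proof -
    have "r1 = exp (2 * \<kappa> + ln \<beta>)" unfolding r1_def using be by (simp add: exp_add)
    also have "2 * \<kappa> + ln \<beta> = ln \<beta> * (\<nu> - 1) / (2 * \<nu>)" unfolding \<kappa>_def using nu by (simp add: field_simps)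
    finally show ?thesis .
  qed
  have r1: "0 < r1" "r1 < 1"
  proof -
    show "0 < r1" unfolding r1_def using be by simp
    have "ln \<beta>  *  (\<nu> - 1) / (2 * \<nu>) < 0" using lnb nu by (simp add: mult_neg_pos divide_neg_pos)
    then show "r1 < 1" unfolding r1e by simp
  qed
  have r2e: "r2 = exp (ln \<beta> * (\<nu> - 1) / 2)"
  proof -
    have "r2 = exp (- 2 * \<nu> * \<kappa> - ln \<beta>)" unfolding r2_def using be by (simp add: exp_diff)
    also have "- 2 * \<nu> * \<kappa> - ln \<beta> = ln \<beta> * (\<nu> - 1) / 2" unfolding \<kappa>_def using nu by (simp add: field_simps)
    finally show ?thesis .
  qed
  have r2: "0 < r2" "r2 < 1"
  proof -
    show "0 < r2" unfolding r2_def using be by simp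
    have "ln \<beta>  *  (\<nu> - 1) / 2 < 0" using lnb nu by (simp add: mult_neg_pos)
    then show "r2 < 1" unfolding r2e by simp
  qed
  define A where "A = (1+C)  *  exp (2 * \<nu> * \<kappa>) / \<beta>^l"
  define B where "B = 2 * C/(1-\<beta>)"
  define T where "T = (\<lambda>n::nat. K  *  (A  *  r2^n + B  *  r1^n))"
  have "T \<longlonglongrightarrow> K  *  (A  *  0 + B  *  0)" unfolding T_def
    by (intro tendsto_intros LIMSEQ_power_zero) (use r1 r2 in auto)
  then have "T \<longlonglongrightarrow> 0" by simp
  then have "eventually (\<lambda>n. T n < \<epsilon>) sequentially" using e by (rule order_tendstoD(2))
  then obtain N where N: "\<And>n. n \<ge> N \<Longrightarrow> T n < \<epsilon>" by (auto simp: eventually_sequentially)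
  define S where "S = \<kappa>  *  N / h^(N+1) + 1"
  have S0: "S > 0" unfolding S_def using kp h by (simp add: add_nonneg_pos)
  have "\<forall>s\<ge>S. \<exists>n\<ge>1. K  *  (exp (-2 * s * \<nu> * h^n)  *  (1/\<beta>^(n+l) + C * \<beta>^(n+l))
            + exp (2 * s * h^(n+1))  *  C  *  (2 * \<beta>^n/(1-\<beta>))) < \<epsilon>"
  proof (intro allI impI)
    fix s assume sS: "s \<ge> S"
    then have s0: "s > 0" using S0 by simp
    define P where "P = (\<lambda>n::nat. s  *  h^(n+1) \<le> \<kappa>  *  n)"
    have "(\<lambda>n. s  *  (h  *  h^n)) \<longlonglongrightarrow> s  *  (h  *  0)"
      by (intro tendsto_intros LIMSEQ_power_zero) (use h in auto)
    then have "(\<lambda>n. s  *  h^(n+1)) \<longlonglongrightarrow> 0" by simp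
    then have "eventually (\<lambda>n. s  *  h^(n+1) < \<kappa>) sequentially" using kp by (rule order_tendstoD(2))
    then obtain M where M: "\<And>n. n \<ge> M \<Longrightarrow> s  *  h^(n+1) < \<kappa>" by (auto simp: eventually_sequentially)
    have "P (M+1)"
    proof -
      have "s  *  h^(M+1+1) < \<kappa>" using M[of "M+1"] by simp
      also have "\<kappa> \<le> \<kappa>  *  real (M+1)" using kp by simp
      finally show ?thesis unfolding P_def by simp
    qed
    define n where "n = (LEAST n. P n)"
    have Pn: "P n" unfolding n_def by (rule LeastI) fact
    have nN: "n > N"
    proof (rule ccontr)
      assume "\<not> n > N" then have nle: "n \<le> N" by simp
      have "h^(N+1) \<le> h^(n+1)" using nle h by (intro power_decreasing) auto
      then have "S  *  h^(N+1) \<le> s  *  h^(n+1)" using sS S0 h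
        by (intro mult_mono) auto
      moreover have "S  *  h^(N+1) = \<kappa>  *  N + h^(N+1)" unfolding S_def using h by (simp add: field_simps)
      moreover have "\<kappa>  *  n \<le> \<kappa>  *  N" using nle kp by simp
      moreover have "h^(N+1) > 0" using h by simp
      ultimately have "\<kappa>  *  n < s  *  h^(n+1)" by linarith
      then show False using Pn unfolding P_def by simp
    qed
    then have n1: "n \<ge> 1" by simp
    have nP: "\<not> P (n - 1)" unfolding n_def by (rule not_less_Least) (use n1 n_def in auto)
    have low: "s  *  h^n > \<kappa>  *  (real n - 1)"
      using nP n1 unfolding P_def by (simp add: of_nat_diff)
    have up: "s  *  h^(n+1) \<le> \<kappa>  *  n" using Pn unfolding P_def .
    have bl: "0 < \<beta>^(n+l)" "\<beta>^(n+l) \<le> 1" using be by (auto intro: power_le_one)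
    have t1a: "exp (-2 * s * \<nu> * h^n) \<le> exp (2 * \<nu> * \<kappa>)  *  exp (-2 * \<nu> * \<kappa>)^n"
    proof -
      have "-2 * s * \<nu> * h^n \<le> -2 * \<nu> * (\<kappa>  *  (real n - 1))"
        using low nu by (simp add: mult_left_mono)
      then have "exp (-2 * s * \<nu> * h^n) \<le> exp (-2 * \<nu> * (\<kappa>  *  (real n - 1)))" by simp
      also have "\<dots> = exp (2 * \<nu> * \<kappa> + real n  *  (-2 * \<nu> * \<kappa>))" by (simp add: algebra_simps)
      also have "\<dots> = exp (2 * \<nu> * \<kappa>)  *  exp (-2 * \<nu> * \<kappa>)^n" by (simp only: exp_add exp_of_nat_mult)
      finally show ?thesis .
    qed
    have t1b: "1/\<beta>^(n+l) + C * \<beta>^(n+l) \<le> (1+C)/\<beta>^l  *  (1/\<beta>)^n"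
    proof -
      have "C * \<beta>^(n+l) \<le> C" using bl C by (simp add: mult_left_le)
      also have "C \<le> C/\<beta>^(n+l)" using bl C by (simp add: le_divide_eq mult_left_le)
      finally have "1/\<beta>^(n+l) + C * \<beta>^(n+l) \<le> (1+C)/\<beta>^(n+l)" by (simp add: add_divide_distrib)
      also have "\<dots> = (1+C)/\<beta>^l  *  (1/\<beta>)^n" by (simp add: power_add power_one_over field_simps)
      finally show ?thesis .
    qed
    have t1: "exp (-2 * s * \<nu> * h^n)  *  (1/\<beta>^(n+l) + C * \<beta>^(n+l)) \<le> A  *  r2^n"
    proof -
      have "exp (-2 * s * \<nu> * h^n)  *  (1/\<beta>^(n+l) + C * \<beta>^(n+l))
          \<le> (exp (2 * \<nu> * \<kappa>)  *  exp (-2 * \<nu> * \<kappa>)^n)  *  ((1+C)/\<beta>^l  *  (1/\<beta>)^n)"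
        using t1a t1b bl C by (intro mult_mono) auto
      also have "\<dots> = A  *  r2^n" unfolding A_def r2_def by (simp add: power_divide field_simps)
      finally show ?thesis .
    qed
    have t2: "exp (2 * s * h^(n+1))  *  C  *  (2 * \<beta>^n/(1-\<beta>)) \<le> B  *  r1^n"
    proof -
      have "exp (2 * s * h^(n+1)) \<le> exp (real n  *  (2 * \<kappa>))" using up by (simp add: ac_simps)
      also have "\<dots> = exp (2 * \<kappa>)^n" by (simp add: exp_of_nat_mult)
      finally have "exp (2 * s * h^(n+1))  *  (C  *  (2 * \<beta>^n/(1-\<beta>))) \<le> exp (2 * \<kappa>)^n  *  (C  *  (2 * \<beta>^n/(1-\<beta>)))"
        using C be by (intro mult_right_mono) auto
      also have "\<dots> = B  *  r1^n" unfolding B_def r1_def by (simp add: power_mult_distrib field_simps)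
      finally show ?thesis by (simp add: mult.assoc)
    qed
    have "K  *  (exp (-2 * s * \<nu> * h^n)  *  (1/\<beta>^(n+l) + C * \<beta>^(n+l))
            + exp (2 * s * h^(n+1))  *  C  *  (2 * \<beta>^n/(1-\<beta>))) \<le> T n"
      unfolding T_def using t1 t2 K by (intro mult_left_mono add_mono) auto
    also have "\<dots> < \<epsilon>" using N nN by simp
    finally show "\<exists>n\<ge>1. K  *  (exp (-2 * s * \<nu> * h^n)  *  (1/\<beta>^(n+l) + C * \<beta>^(n+l))
            + exp (2 * s * h^(n+1))  *  C  *  (2 * \<beta>^n/(1-\<beta>))) < \<epsilon>" using n1 by blast
  qed
  then show ?thesis using S0 by blast
qed



definition ramp :: "real \<Rightarrow> real \<Rightarrow> real \<Rightarrow> real" where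
  "ramp X Y r = max 0 (min 1 ((r - X) / (Y - X)))"
definition dramp :: "real \<Rightarrow> real \<Rightarrow> real \<Rightarrow> real" where
  "dramp X Y r = (if X < r \<and> r < Y then 1 / (Y - X) else 0)"

lemma ramp_cont: "continuous_on S (ramp X Y)"
  unfolding ramp_def divide_inverse by (intro continuous_intros)

lemma ramp_0: "X < Y \<Longrightarrow> r \<le> X \<Longrightarrow> ramp X Y r = 0"
  unfolding ramp_def by (auto simp: divide_nonpos_pos)
lemma ramp_1: "X < Y \<Longrightarrow> Y \<le> r \<Longrightarrow> ramp X Y r = 1"
  unfolding ramp_def by (auto simp: le_divide_eq)
lemma ramp_bounds: "0 \<le> ramp X Y r" "ramp X Y r \<le> 1"
  unfolding ramp_def by auto
lemma dramp_0: "r \<le> X \<or> Y \<le> r \<Longrightarrow> dramp X Y r = 0"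
  unfolding dramp_def by auto
lemma dramp_sq: "(dramp X Y r)^2 = dramp X Y r / (Y - X)"
  unfolding dramp_def by (simp add: power2_eq_square)
lemma dramp_sq_le: "X < Y \<Longrightarrow> (dramp X Y r)^2 \<le> 1 / (Y - X)^2"
  unfolding dramp_def by (simp add: power_divide)

lemma ramp_deriv:
  assumes "X < Y" "r \<noteq> X" "r \<noteq> Y"
  shows "(ramp X Y has_real_derivative dramp X Y r) (at r)"
proof -
  consider "r < X" | "X < r" "r < Y" | "Y < r" using assms by linarith
  then show ?thesis
  proof cases
    case 1
    have d: "((\<lambda>_. 0) has_real_derivative 0) (at r)" by simp
    moreover have "dramp X Y r = 0" using 1 by (simp add: dramp_def)
    ultimately have e: "dramp X Y r = 0" by blast
    have "(ramp X Y has_real_derivative 0) (at r)"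
      by (rule has_field_derivative_transform_within_open[OF d, where S="{..<X}"])
         (use 1 d assms in \<open>auto simp: dramp_def ramp_0\<close>)
    then show ?thesis using e by simp
  next
    case 2
    have d: "((\<lambda>x. (x - X) / (Y - X)) has_real_derivative 1 / (Y - X)) (at r)"
      using assms by (auto intro!: derivative_eq_intros)
    moreover have "dramp X Y r = 1 / (Y - X)" using 2 by (simp add: dramp_def)
    ultimately have e: "dramp X Y r = 1 / (Y - X)" by blast
    have "(ramp X Y has_real_derivative 1 / (Y - X)) (at r)"
      by (rule has_field_derivative_transform_within_open[OF d, where S="{X<..<Y}"])
         (use 2 d assms in \<open>auto simp: dramp_def ramp_def divide_le_eq_1 le_divide_eq\<close>)
    then show ?thesis using e by simp
  next
    case 3
    have d: "((\<lambda>_. 1) has_real_derivative 0) (at r)" by simp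
    moreover have "dramp X Y r = 0" using 3 by (simp add: dramp_def)
    ultimately have e: "dramp X Y r = 0" by blast
    have "(ramp X Y has_real_derivative 0) (at r)"
      by (rule has_field_derivative_transform_within_open[OF d, where S="{Y<..}"])
         (use 3 d assms in \<open>auto simp: dramp_def ramp_1\<close>)
    then show ?thesis using e by simp
  qed
qed

lemma ramp_int:
  assumes "X < Y" "u \<le> v"
  shows "((\<lambda>r. K * dramp X Y r) has_integral (K * ramp X Y v - K * ramp X Y u)) {u..v}"
proof (rule fundamental_theorem_of_calculus_interior_strong[where S="{X,Y}"])
  show "continuous_on {u..v} (\<lambda>r. K * ramp X Y r)" by (intro continuous_intros ramp_cont)
  fix x assume "x \<in> {u<..<v} - {X, Y}"
  then have "((\<lambda>r. K * ramp X Y r) has_real_derivative K * dramp X Y x) (at x)"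
    using assms by (auto intro!: DERIV_cmult ramp_deriv)
  then show "((\<lambda>r. K * ramp X Y r) has_vector_derivative K * dramp X Y x) (at x)"
    by (simp add: has_real_derivative_iff_has_vector_derivative)
qed (use assms in auto)

lemma ramp_int_refl:
  assumes "X < Y" "u \<le> v"
  shows "((\<lambda>r. - (K * dramp X Y (1 - r))) has_integral (K * ramp X Y (1 - v) - K * ramp X Y (1 - u))) {u..v}"
proof (rule fundamental_theorem_of_calculus_interior_strong[where S="{1-X,1-Y}"])
  show "continuous_on {u..v} (\<lambda>r. K * ramp X Y (1 - r))"
    by (intro continuous_intros continuous_on_compose2[OF ramp_cont[of UNIV]]) auto
  fix x assume x: "x \<in> {u<..<v} - {1-X, 1-Y}"
  have d1: "((\<lambda>r. 1 - r) has_real_derivative -1) (at x)" by (auto intro!: derivative_eq_intros)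
  have "((\<lambda>r. ramp X Y (1 - r)) has_real_derivative dramp X Y (1 - x) * -1) (at x)"
    by (rule DERIV_chain2[OF _ d1]) (rule ramp_deriv, use x assms in auto)
  then have "((\<lambda>r. K * ramp X Y (1 - r)) has_real_derivative K * (dramp X Y (1 - x) * -1)) (at x)"
    by (rule DERIV_cmult)
  then show "((\<lambda>r. K * ramp X Y (1 - r)) has_vector_derivative - (K * dramp X Y (1 - x))) (at x)"
    by (simp add: has_real_derivative_iff_has_vector_derivative)
qed (use assms in auto)




lemma test_H1:
  fixes X Y a b :: real and psi g :: "real \<Rightarrow> real"
  assumes XY: "0 < X" "X < Y" "Y \<le> a" and ab: "a < b" "a + b = 1" and H: "H1pair a b psi g"
  shows "H1pair 0 1 (\<lambda>r. if r \<le> a then psi a * ramp X Y r else if r < b then psi r else psi b * ramp X Y (1 - r))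
                     (\<lambda>r. if r \<le> a then psi a * dramp X Y r else if r < b then g r else - (psi b * dramp X Y (1 - r)))"
    (is "H1pair 0 1 ?P ?G")
proof -
  define A0 where "A0 = psi a"
  define B0 where "B0 = psi b"
  have ra: "ramp X Y a = 1" using XY by (intro ramp_1) auto
  have r0: "ramp X Y 0 = 0" using XY by (intro ramp_0) auto
  have iL: "(?G has_integral (A0 * ramp X Y v - A0 * ramp X Y u)) {u..v}" if "u \<le> v" "v \<le> a" for u v
  proof -
    have "((\<lambda>r. A0 * dramp X Y r) has_integral (A0 * ramp X Y v - A0 * ramp X Y u)) {u..v}"
      using XY that by (intro ramp_int) auto
    then show ?thesis by (rule has_integral_eq[rotated]) (use that in \<open>auto simp: A0_def\<close>)
  qed
  have iR: "(?G has_integral (B0 * ramp X Y (1 - v) - B0 * ramp X Y (1 - u))) {u..v}" if "b \<le> u" "u \<le> v" for u v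
  proof -
    have "((\<lambda>r. - (B0 * dramp X Y (1 - r))) has_integral (B0 * ramp X Y (1 - v) - B0 * ramp X Y (1 - u))) {u..v}"
      using XY that by (intro ramp_int_refl) auto
    then show ?thesis by (rule has_integral_eq[rotated]) (use that ab in \<open>auto simp: B0_def\<close>)
  qed
  have gi: "g integrable_on {a..b}" using H1D(1)[OF H] .
  have pint: "integral {u..v} g = psi v - psi u" if "a \<le> u" "u \<le> v" "v \<le> b" for u v
  proof -
    have e1: "psi v = psi a + integral {a..v} g" by (rule H1D(3)[OF H]) (use that in auto)
    have e2: "psi u = psi a + integral {a..u} g" by (rule H1D(3)[OF H]) (use that in auto)
    have "g integrable_on {a..v}" using gi that by (rule_tac integrable_subinterval_real) auto
    then have "integral {a..u} g + integral {u..v} g = integral {a..v} g"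
      using that by (intro Henstock_Kurzweil_Integration.integral_combine) auto
    then show ?thesis using e1 e2 by linarith
  qed
  have iM: "(?G has_integral (psi v - psi u)) {u..v}" if "a \<le> u" "u \<le> v" "v \<le> b" for u v
  proof -
    have "g integrable_on {u..v}" using gi that by (rule_tac integrable_subinterval_real) auto
    then have "(g has_integral (psi v - psi u)) {u..v}" using pint[OF that] by (metis has_integral_integral)
    then show ?thesis by (rule has_integral_spike_finite[where S="{a,b}", rotated 2]) (use that in auto)
  qed
  have I0x: "(?G has_integral (?P x)) {0..x}" if "0 \<le> x" "x \<le> 1" for x :: real
  proof -
    consider "x \<le> a" | "a < x" "x < b" | "b \<le> x" by linarith
    then show ?thesis
    proof cases
      case 1
      then show ?thesis using iL[of 0 x] that r0 by (simp add: A0_def)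
    next
      case 2
      have "(?G has_integral ((A0 * ramp X Y a - A0 * ramp X Y 0) + (psi x - psi a))) {0..x}"
        by (rule has_integral_combine[OF _ _ iL iM]) (use 2 ab XY in auto)
      then show ?thesis using 2 ra r0 by (simp add: A0_def)
    next
      case 3
      have i0b: "(?G has_integral ((A0 * ramp X Y a - A0 * ramp X Y 0) + (psi b - psi a))) {0..b}"
        by (rule has_integral_combine[OF _ _ iL iM]) (use 3 ab XY in auto)
      have "(?G has_integral (((A0 * ramp X Y a - A0 * ramp X Y 0) + (psi b - psi a))
              + (B0 * ramp X Y (1 - x) - B0 * ramp X Y (1 - b)))) {0..x}"
        by (rule has_integral_combine[OF _ _ i0b iR]) (use 3 ab XY in auto)
      moreover have "1 - b = a" using ab by simp
      ultimately show ?thesis using 3 ra r0 ab by (simp add: A0_def B0_def)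
    qed
  qed
  have Gi: "?G integrable_on {0..1}" using I0x[of 1] by (auto simp: integrable_on_def)
  have G2L: "(\<lambda>r. (?G r)^2) integrable_on {0..a}"
  proof -
    have "(\<lambda>r. (A0^2 / (Y - X)) * dramp X Y r) integrable_on {0..a}"
      using ramp_int[OF XY(2), of 0 a "A0^2 / (Y - X)"] XY by (auto intro: has_integral_integrable)
    then show ?thesis
      by (rule integrable_eq) (auto simp: A0_def power_mult_distrib dramp_sq)
  qed
  have G2R: "(\<lambda>r. (?G r)^2) integrable_on {b..1}"
  proof -
    have "(\<lambda>r. - ((B0^2 / (Y - X)) * dramp X Y (1 - r))) integrable_on {b..1}"
      using ramp_int_refl[OF XY(2), of b 1 "B0^2 / (Y - X)"] ab XY by (auto intro: has_integral_integrable)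
    then have "(\<lambda>r. (B0^2 / (Y - X)) * dramp X Y (1 - r)) integrable_on {b..1}"
      using integrable_neg by fastforce
    then show ?thesis
      by (rule integrable_eq) (use ab in \<open>auto simp: B0_def power_mult_distrib dramp_sq\<close>)
  qed
  have G2M: "(\<lambda>r. (?G r)^2) integrable_on {a..b}"
    by (rule integrable_spike_finite[where S="{a,b}", OF _ _ H1D(2)[OF H]]) auto
  have G2: "(\<lambda>r. (?G r)^2) integrable_on {0..1}"
    by (rule Henstock_Kurzweil_Integration.integrable_combine[OF _ _ G2L Henstock_Kurzweil_Integration.integrable_combine[OF _ _ G2M G2R]]) (use ab XY in auto)
  show ?thesis unfolding H1pair_def
  proof (intro conjI ballI Gi G2)
    fix x :: real assume x: "x \<in> {0..1}"
    have "?P 0 = 0" using r0 ab XY by simp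
    then show "?P x = ?P 0 + integral {0..x} ?G" using I0x[of x] x by (simp add: integral_unique)
  qed
qed




lemma int_le_const:
  fixes F :: "real \<Rightarrow> real"
  assumes "F integrable_on {p..q}" "p \<le> q" "\<And>r. r \<in> {p..q} \<Longrightarrow> F r \<le> K"
  shows "integral {p..q} F \<le> K * (q - p)"
proof -
  have "integral {p..q} F \<le> integral {p..q} (\<lambda>_. K)"
    by (rule integral_le[OF assms(1) integrable_const_ivl assms(3)])
  also have "\<dots> = K * (q - p)" using assms(2) by simp
  finally show ?thesis .
qed

lemma split_int:
  fixes F :: "real \<Rightarrow> real"
  assumes "F integrable_on {p..q}" "p \<le> c" "c \<le> q"
  shows "integral {p..q} F = integral {p..c} F + integral {c..q} F"
  using Henstock_Kurzweil_Integration.integral_combine[OF assms(2,3,1)] by simp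

lemma piece_bound:
  fixes X Y a s C K w cv M1 M2 t :: real and m :: "real \<Rightarrow> real"
  assumes XY: "X < Y" and s: "0 \<le> s" and w: "0 \<le> w" "w \<le> exp (2 * s * m t)"
    and cv: "0 \<le> cv" "cv \<le> C"
  shows "t \<le> X \<Longrightarrow> w * ((K * dramp X Y t)^2 + cv * (K * ramp X Y t)^2) \<le> 0"
    and "X \<le> t \<Longrightarrow> t \<le> Y \<Longrightarrow> m t \<le> M1 \<Longrightarrow>
         w * ((K * dramp X Y t)^2 + cv * (K * ramp X Y t)^2) \<le> exp (2 * s * M1) * K^2 * (1 / (Y - X)^2 + C)"
    and "Y \<le> t \<Longrightarrow> m t \<le> M2 \<Longrightarrow>
         w * ((K * dramp X Y t)^2 + cv * (K * ramp X Y t)^2) \<le> exp (2 * s * M2) * K^2 * C"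
proof -
  show "t \<le> X \<Longrightarrow> w * ((K * dramp X Y t)^2 + cv * (K * ramp X Y t)^2) \<le> 0"
    using XY by (simp add: dramp_0 ramp_0)
next
  assume t: "X \<le> t" "t \<le> Y" "m t \<le> M1"
  have we: "w \<le> exp (2 * s * M1)"
  proof -
    have "2 * s * m t \<le> 2 * s * M1" using t s by (simp add: mult_left_mono)
    then show ?thesis using w by (meson exp_le_cancel_iff order_trans)
  qed
  have d2: "(K * dramp X Y t)^2 \<le> K^2 * (1 / (Y - X)^2)"
    unfolding power_mult_distrib by (intro mult_left_mono dramp_sq_le XY) simp
  have r2: "(ramp X Y t)^2 \<le> 1" using ramp_bounds[of X Y t] by (simp add: power_le_one)
  have c2: "cv * (K * ramp X Y t)^2 \<le> K^2 * C"
  proof -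
    have "cv * (K * ramp X Y t)^2 = K^2 * (cv * (ramp X Y t)^2)" by (simp add: power_mult_distrib)
    also have "\<dots> \<le> K^2 * C"
    proof (intro mult_left_mono)
      show "cv * (ramp X Y t)^2 \<le> C" using cv r2 by (metis mult_le_cancel_left1 mult_right_le_one_le order_trans zero_le_power2 mult.commute) 
    qed simp
    finally show ?thesis .
  qed
  have "w * ((K * dramp X Y t)^2 + cv * (K * ramp X Y t)^2) \<le> exp (2 * s * M1) * (K^2 * (1 / (Y - X)^2) + K^2 * C)"
  proof (rule mult_mono[OF we add_mono[OF d2 c2]])
    show "0 \<le> (K * dramp X Y t)^2 + cv * (K * ramp X Y t)^2" using cv by simp
  qed simp
  then show "w * ((K * dramp X Y t)^2 + cv * (K * ramp X Y t)^2) \<le> exp (2 * s * M1) * K^2 * (1 / (Y - X)^2 + C)"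
    by (simp add: algebra_simps)
next
  assume t: "Y \<le> t" "m t \<le> M2"
  have we: "w \<le> exp (2 * s * M2)"
  proof -
    have "2 * s * m t \<le> 2 * s * M2" using t s by (simp add: mult_left_mono)
    then show ?thesis using w by (meson exp_le_cancel_iff order_trans)
  qed
  have "dramp X Y t = 0" using t by (simp add: dramp_0)
  moreover have "ramp X Y t = 1" using t XY by (simp add: ramp_1)
  ultimately have "w * ((K * dramp X Y t)^2 + cv * (K * ramp X Y t)^2) = w * (cv * K^2)" by simp
  also have "\<dots> \<le> exp (2 * s * M2) * (C * K^2)" using we w cv by (intro mult_mono) auto
  finally show "w * ((K * dramp X Y t)^2 + cv * (K * ramp X Y t)^2) \<le> exp (2 * s * M2) * K^2 * C"
    by (simp add: algebra_simps)
qed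


lemma energy:
  fixes X Y a b s C M1 M2 E :: real and d :: nat and psi g m c :: "real \<Rightarrow> real"
  assumes XY: "0 < X" "X < Y" "Y \<le> a" and ab: "a < b" "a + b = 1" and H: "H1pair a b psi g"
    and s: "0 \<le> s" and mc: "continuous_on {0..1} m" and cc: "continuous_on {0..1} c"
    and cpos: "\<And>r. r \<in> {0..1} \<Longrightarrow> 0 < c r" and cC: "\<And>r. r \<in> {0..1} \<Longrightarrow> c r \<le> C"
    and m0: "\<And>r. r \<in> {a..b} \<Longrightarrow> m r = 0" and msym: "\<And>r. r \<in> {0..1} \<Longrightarrow> m r = m (1 - r)"
    and M1: "\<And>r. r \<in> {X..Y} \<Longrightarrow> m r \<le> M1" and M2: "\<And>r. r \<in> {Y..a} \<Longrightarrow> m r \<le> M2"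
    and Edef: "integral {a..b} (\<lambda>r. r^(d-1) * ((g r)^2 + c r * (psi r)^2)) = E"
    and norm: "integral {a..b} (\<lambda>r. r^(d-1) * (psi r)^2) = 1"
  shows "lambda_s d m c s \<le> E + ((psi a)^2 + (psi b)^2) *
           (exp (2 * s * M1) * (1 / (Y - X)^2 + C) * (Y - X) + exp (2 * s * M2) * C * (a - Y))
         \<and> RS 0 1 (\<lambda>r. r^(d-1) * exp (2 * s * m r)) c \<noteq> {}"
proof -
  define Phi where "Phi = (\<lambda>r. if r \<le> a then psi a * ramp X Y r else if r < b then psi r else psi b * ramp X Y (1 - r))"
  define G where "G = (\<lambda>r. if r \<le> a then psi a * dramp X Y r else if r < b then g r else - (psi b * dramp X Y (1 - r)))"
  have H01: "H1pair 0 1 Phi G" unfolding Phi_def G_def by (rule test_H1[OF XY ab H])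
  define W where "W = (\<lambda>r::real. r^(d-1) * exp (2 * s * m r))"
  have Wc: "continuous_on {0..1} W" unfolding W_def by (intro continuous_intros mc)
  have W0: "0 \<le> W r" if "r \<in> {0..1}" for r using that unfolding W_def by auto
  have Wle: "W r \<le> exp (2 * s * m r)" if "r \<in> {0..1}" for r
  proof -
    have "r^(d-1) \<le> 1" using that by (intro power_le_one) auto
    then show ?thesis unfolding W_def using that by (intro mult_left_le_one_le) auto
  qed
  have c0: "0 \<le> c r" if "r \<in> {0..1}" for r using cpos[OF that] by simp
  define F where "F = (\<lambda>r. W r * ((G r)^2 + c r * (Phi r)^2))"
  define P where "P = (\<lambda>r. W r * (Phi r)^2)"
  have Fi: "F integrable_on {0..1}" unfolding F_def by (rule H1_int(2)[OF H01 Wc cc])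
  have Pi: "P integrable_on {0..1}" unfolding P_def by (rule H1_int(1)[OF H01 Wc cc])
  have Fs: "F integrable_on {p..q}" if "0 \<le> p" "q \<le> 1" for p q
    using integrable_subinterval_real[OF Fi] that by auto
  have Ps: "P integrable_on {p..q}" if "0 \<le> p" "q \<le> 1" for p q
    using integrable_subinterval_real[OF Pi] that by auto
  have a1: "0 < a" "a < 1" "b < 1" "0 < b" using XY ab by auto
  have mid: "W r = r^(d-1)" "Phi r = psi r" "G r = g r" if "r \<in> {a<..<b}" for r
    using that m0[of r] unfolding W_def Phi_def G_def by auto
  have Pmid: "integral {a..b} P = 1"
  proof -
    have "integral {a..b} P = integral {a..b} (\<lambda>r. r^(d-1) * (psi r)^2)"
      by (rule integral_spike[where S="{a,b}"]) (auto simp: P_def mid)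
    then show ?thesis using norm by simp
  qed
  have Dn: "integral {0..1} P \<ge> 1"
  proof -
    have "integral {0..1} P = integral {0..a} P + integral {a..1} P"
      by (rule split_int[OF Pi]) (use a1 in auto)
    also have "integral {a..1} P = integral {a..b} P + integral {b..1} P"
      by (rule split_int[OF Ps]) (use a1 ab in auto)
    finally have e: "integral {0..1} P = integral {0..a} P + integral {a..b} P + integral {b..1} P" by simp
    have "0 \<le> integral {0..a} P" by (rule integral_nonneg[OF Ps]) (use a1 W0 in \<open>auto simp: P_def\<close>)
    moreover have "0 \<le> integral {b..1} P" by (rule integral_nonneg[OF Ps]) (use a1 W0 in \<open>auto simp: P_def\<close>)
    ultimately show ?thesis using e Pmid by simp
  qed
  have N0: "0 \<le> integral {0..1} F"
    by (rule integral_nonneg[OF Fi]) (use W0 c0 in \<open>auto simp: F_def\<close>)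
  have ray: "Inf (RS 0 1 W c) * integral {0..1} P \<le> integral {0..1} F"
    unfolding P_def F_def by (rule RS_rayleigh[OF H01 Wc cc]) (use W0 c0 in auto)
  have lamN: "lambda_s d m c s \<le> integral {0..1} F"
  proof -
    have L: "lambda_s d m c s = Inf (RS 0 1 W c)" unfolding lambda_s_RS W_def ..
    show ?thesis
    proof (cases "Inf (RS 0 1 W c) \<le> 0")
      case True then show ?thesis using N0 L by simp
    next
      case False
      then have "Inf (RS 0 1 W c) \<le> Inf (RS 0 1 W c) * integral {0..1} P"
        using Dn by (simp add: mult_le_cancel_left1)
      then show ?thesis using ray L by simp
    qed
  qed
  define A where "A = psi a"
  define B where "B = psi b"
  define e1 where "e1 = exp (2 * s * M1)"
  define e2 where "e2 = exp (2 * s * M2)"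
  define L where "L = Y - X"
  have FL: "F r = W r * ((A * dramp X Y r)^2 + c r * (A * ramp X Y r)^2)" if "r \<le> a" for r
    using that unfolding F_def G_def Phi_def A_def by simp
  have FR: "F r = W r * ((B * dramp X Y (1 - r))^2 + c r * (B * ramp X Y (1 - r))^2)" if "b \<le> r" for r
    using that ab unfolding F_def G_def Phi_def B_def by (simp add: power2_eq_square)
  have wL: "0 \<le> W r" "W r \<le> exp (2 * s * m r)" if "r \<in> {0..a}" for r using W0 Wle that a1 by auto
  have wR: "0 \<le> W r" "W r \<le> exp (2 * s * m (1 - r))" if "r \<in> {b..1}" for r
  proof -
    have r01: "r \<in> {0..1}" using that a1 by auto
    show "0 \<le> W r" using W0[OF r01] .
    show "W r \<le> exp (2 * s * m (1 - r))" using Wle[OF r01] msym[OF r01] by simp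
  qed
  have cL: "0 \<le> c r" "c r \<le> C" if "r \<in> {0..1}" for r using c0 cC that by auto
  have I1: "integral {0..X} F \<le> 0 * (X - 0)"
    by (rule int_le_const[OF Fs]) (use XY a1 in \<open>auto simp: FL intro!: piece_bound(1)[OF XY(2) s _ _ cL] wL\<close>)
  have I2: "integral {X..Y} F \<le> (e1 * A^2 * (1 / L^2 + C)) * (Y - X)"
    unfolding e1_def L_def
    by (rule int_le_const[OF Fs]) (use XY a1 in \<open>auto simp: FL intro!: piece_bound(2)[OF XY(2) s _ _ cL] wL M1\<close>)
  have I3: "integral {Y..a} F \<le> (e2 * A^2 * C) * (a - Y)"
    unfolding e2_def
    by (rule int_le_const[OF Fs]) (use XY a1 in \<open>auto simp: FL intro!: piece_bound(3)[OF XY(2) s _ _ cL] wL M2\<close>)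
  have I4: "integral {a..b} F = E"
  proof -
    have "integral {a..b} F = integral {a..b} (\<lambda>r. r^(d-1) * ((g r)^2 + c r * (psi r)^2))"
      by (rule integral_spike[where S="{a,b}"]) (auto simp: F_def mid)
    then show ?thesis using Edef by simp
  qed
  have I5: "integral {b..1-Y} F \<le> (e2 * B^2 * C) * ((1 - Y) - b)"
    unfolding e2_def
    by (rule int_le_const[OF Fs]) (use XY a1 ab in \<open>auto simp: FR intro!: piece_bound(3)[OF XY(2) s _ _ cL] wR M2\<close>)
  have I6: "integral {1-Y..1-X} F \<le> (e1 * B^2 * (1 / L^2 + C)) * ((1 - X) - (1 - Y))"
    unfolding e1_def L_def
    by (rule int_le_const[OF Fs]) (use XY a1 ab in \<open>auto simp: FR intro!: piece_bound(2)[OF XY(2) s _ _ cL] wR M1\<close>)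
  have I7: "integral {1-X..1} F \<le> 0 * (1 - (1 - X))"
    by (rule int_le_const[OF Fs]) (use XY a1 ab in \<open>auto simp: FR intro!: piece_bound(1)[OF XY(2) s _ _ cL] wR\<close>)
  have sp: "integral {0..1} F = integral {0..X} F + integral {X..Y} F + integral {Y..a} F + integral {a..b} F
      + integral {b..1-Y} F + integral {1-Y..1-X} F + integral {1-X..1} F"
  proof -
    have "integral {0..1} F = integral {0..X} F + integral {X..1} F" by (rule split_int[OF Fi]) (use XY a1 in auto)
    moreover have "integral {X..1} F = integral {X..Y} F + integral {Y..1} F" by (rule split_int[OF Fs]) (use XY a1 in auto)
    moreover have "integral {Y..1} F = integral {Y..a} F + integral {a..1} F" by (rule split_int[OF Fs]) (use XY a1 in auto)
    moreover have "integral {a..1} F = integral {a..b} F + integral {b..1} F" by (rule split_int[OF Fs]) (use XY a1 ab in auto)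
    moreover have "integral {b..1} F = integral {b..1-Y} F + integral {1-Y..1} F" by (rule split_int[OF Fs]) (use XY a1 ab in auto)
    moreover have "integral {1-Y..1} F = integral {1-Y..1-X} F + integral {1-X..1} F" by (rule split_int[OF Fs]) (use XY a1 ab in auto)
    ultimately show ?thesis by simp
  qed
  have bY: "(1 - Y) - b = a - Y" using ab by simp
  have eqL: "(1 - X) - (1 - Y) = L" unfolding L_def by simp
  have I2': "integral {X..Y} F \<le> e1 * A^2 * (1 / L^2 + C) * L" using I2 unfolding L_def[symmetric] .
  have I6': "integral {1-Y..1-X} F \<le> e1 * B^2 * (1 / L^2 + C) * L" using I6 unfolding eqL .
  have I5': "integral {b..1-Y} F \<le> e2 * B^2 * C * (a - Y)" using I5 unfolding bY .
  have I1': "integral {0..X} F \<le> 0" using I1 by simp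
  have I7': "integral {1-X..1} F \<le> 0" using I7 by simp
  have ident: "E + (A^2 + B^2) * (e1 * (1 / L^2 + C) * L + e2 * C * (a - Y))
     = E + e1 * A^2 * (1 / L^2 + C) * L + e2 * A^2 * C * (a - Y) + e2 * B^2 * C * (a - Y) + e1 * B^2 * (1 / L^2 + C) * L"
    by (simp add: algebra_simps)
  have "integral {0..1} F \<le> E + (A^2 + B^2) * (e1 * (1 / L^2 + C) * L + e2 * C * (a - Y))"
    unfolding ident sp using I1' I2' I3 I4 I5' I6' I7' by linarith
  moreover have "RS 0 1 W c \<noteq> {}"
  proof -
    have "integral {0..1} (\<lambda>r. W r * (Phi r)^2) = integral {0..1} P" unfolding P_def ..
    from RS_mem[OF H01 Wc cc this] Dn show ?thesis by fastforce
  qed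
  ultimately show ?thesis using lamN unfolding A_def B_def e1_def e2_def L_def W_def by simp
qed




theorem proposition3p6:
  fixes d :: nat and a b :: real and m m' c :: "real \<Rightarrow> real"
  assumes "d \<ge> 1"
    and "0 < a" "a < b" "b < 1" "a + b = 1"
    and "\<forall>x\<in>{0..1}. (m has_real_derivative m' x) (at x within {0..1})"
    and "continuous_on {0..1} m'"
    and "\<not> (\<exists>k. \<forall>x\<in>{0..1}. m x = k)"
    and "continuous_on {0..1} c"
    and H1a: "\<forall>r\<in>{0..1}. m r = m (1 - r)"
    and H1b: "\<forall>r\<in>{a..b}. m r = 0"
    and H2a: "\<forall>r\<in>{0..1}. c r > 0"
    and H2b: "\<forall>r\<in>{0..a} \<union> {b..1}. c r > lambdaD d c a b"
    and "in_SN m m' a"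
  shows "((\<lambda>s. lambda_s d m c s) \<longlongrightarrow> lambdaN d c a b) at_top"
proof -
  note ab = assms(2-5)
  have cc: "continuous_on {0..1} c" by fact
  have mc: "continuous_on {0..1} m" by (rule DERIV_continuous_on) (use assms(6) in auto)
  obtain \<delta> h \<alpha> \<beta> \<nu> and l :: nat where
    pars: "0 < \<delta>" "\<delta> < a" "0 < h" "h < \<alpha>" "\<alpha> < \<beta>" "\<beta> < 1" "1 < \<nu>"
    and sumF: "(\<Sum>i. \<alpha>^(i+1+l) + \<beta>^(i+1+l)) = a - \<delta>"
    and A1: "\<forall>n\<ge>1. \<forall>r\<in>{Yseq \<delta> \<alpha> \<beta> l (n-1) .. Xseq \<delta> \<alpha> \<beta> l n}. m r \<le> h^n \<and> m (1-r) \<le> h^n"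
    and A2: "\<forall>n\<ge>1. \<forall>r\<in>{Xseq \<delta> \<alpha> \<beta> l n .. Yseq \<delta> \<alpha> \<beta> l n}. m r \<le> - \<nu> * h^n \<and> m (1-r) \<le> - \<nu> * h^n"
    using assms(14) unfolding in_SN_def by blast
  have al: "0 < \<alpha>" "\<alpha> < \<beta>" "\<beta> < 1" using pars by auto
  have h1: "0 < h" "h < 1" using pars by auto
  have A1': "\<forall>n\<ge>1. \<forall>r\<in>{Yseq \<delta> \<alpha> \<beta> l (n-1) .. Xseq \<delta> \<alpha> \<beta> l n}. m r \<le> h^n" using A1 by blast
  have A2': "\<forall>n\<ge>1. \<forall>r\<in>{Xseq \<delta> \<alpha> \<beta> l n .. Yseq \<delta> \<alpha> \<beta> l n}. m r \<le> - \<nu> * h^n" using A2 by blast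
  have c0ab: "\<And>r. r \<in> {a..b} \<Longrightarrow> 0 \<le> c r" using H2a ab by (auto intro: less_imp_le)
  have NleD: "lambdaN d c a b \<le> lambdaD d c a b" by (rule lambdaN_le_D[OF ab(1,2) c0ab])
  have cL: "\<And>r. r \<in> {0..a} \<union> {b..1} \<Longrightarrow> lambdaN d c a b \<le> c r"
    using H2b NleD by (meson less_imp_le order_trans)
  obtain C where C: "\<And>r. r \<in> {0..1} \<Longrightarrow> c r \<le> C" "0 \<le> C"
  proof -
    have "bounded (c ` {0..1})" using cc by (intro compact_imp_bounded compact_continuous_image) auto
    then obtain B where B: "\<forall>x\<in>c ` {0..1}. norm x \<le> B" unfolding bounded_iff by blast
    show ?thesis by (rule that[of "max B 0"]) (use B in \<open>force simp: max_def abs_le_iff\<close>)+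
  qed
  have cpos': "\<And>r. r \<in> {0..1} \<Longrightarrow> 0 < c r" using H2a by blast
  have m0': "\<And>r. r \<in> {a..b} \<Longrightarrow> m r = 0" using H1b by blast
  have msym': "\<And>r. r \<in> {0..1} \<Longrightarrow> m r = m (1 - r)" using H1a by blast
  have RSN_ne: "RS a b (\<lambda>r. r^(d-1)) c \<noteq> {}" using DS_ne[OF ab(1,2)] DS_sub by blast
  have LB: "lambdaN d c a b \<le> lambda_s d m c s"
    if "RS 0 1 (\<lambda>r. r^(d-1) * exp (2 * s * m r)) c \<noteq> {}" for s
    unfolding lambda_s_RS
    by (rule cInf_greatest[OF that], rule lower_bound[OF ab(1-3) cc mc])
       (use cpos' m0' cL in auto)
  show ?thesis
    unfolding tendsto_iff eventually_at_top_linorder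
  proof (intro allI impI)
    fix \<epsilon> :: real assume e: "0 < \<epsilon>"
    have "Inf (RS a b (\<lambda>r. r^(d-1)) c) < lambdaN d c a b + \<epsilon>/2" using e by (simp add: lambdaN_RS)
    then obtain v where v: "v \<in> RS a b (\<lambda>r. r^(d-1)) c" "v < lambdaN d c a b + \<epsilon>/2"
      using cInf_lessD[OF RSN_ne] by blast
    then obtain psi g where H: "H1pair a b psi g"
      and nrm: "integral {a..b} (\<lambda>r. r^(d-1) * (psi r)^2) = 1"
      and vE: "integral {a..b} (\<lambda>r. r^(d-1) * ((g r)^2 + c r * (psi r)^2)) = v"
      unfolding RS_def by blast
    define K where "K = (psi a)^2 + (psi b)^2"
    have K0: "0 \<le> K" unfolding K_def by simp
    obtain S where S: "S > 0" "\<And>s. s \<ge> S \<Longrightarrow> \<exists>n\<ge>1. K * (exp (- 2 * s * \<nu> * h^n) * (1/\<beta>^(n+l) + C * \<beta>^(n+l))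
            + exp (2 * s * h^(n+1)) * C * (2 * \<beta>^n/(1-\<beta>))) < \<epsilon>/2"
      using asymp[OF h1 _ al(3) pars(7) C(2) K0, of "\<epsilon>/2" l] al e by auto
    show "\<exists>S. \<forall>s\<ge>S. dist (lambda_s d m c s) (lambdaN d c a b) < \<epsilon>"
    proof (intro exI allI impI)
      fix s assume sS: "S \<le> s"
      then have s0: "0 \<le> s" using S by simp
      obtain n where n1: "n \<ge> 1" and err: "K * (exp (- 2 * s * \<nu> * h^n) * (1/\<beta>^(n+l) + C * \<beta>^(n+l))
            + exp (2 * s * h^(n+1)) * C * (2 * \<beta>^n/(1-\<beta>))) < \<epsilon>/2"
        using S(2)[OF sS] by blast
      define X where "X = Xseq \<delta> \<alpha> \<beta> l n"
      define Y where "Y = Yseq \<delta> \<alpha> \<beta> l n"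
      have X0: "0 < X" unfolding X_def by (rule X_pos[OF pars(1) al sumF n1])
      have YX: "Y - X = \<beta>^(n+l)" unfolding X_def Y_def by (rule XY_len[OF pars(1) al sumF])
      have XY: "X < Y"
      proof -
        have "0 < \<beta>^(n+l)" using al by simp
        then show ?thesis using YX by linarith
      qed
      have Ya: "Y \<le> a" unfolding Y_def using Y_lt[OF pars(1) al sumF] less_imp_le by blast
      have tb: "a - Y \<le> 2 * \<beta>^n / (1 - \<beta>)" unfolding Y_def by (rule tail_bound[OF pars(1) al sumF])
      have M1: "\<And>r. r \<in> {X..Y} \<Longrightarrow> m r \<le> - \<nu> * h^n" using A2' n1 unfolding X_def Y_def by blast
      have ma: "m a \<le> 0" using H1b ab by simp
      have M2: "\<And>r. r \<in> {Y..a} \<Longrightarrow> m r \<le> h^(n+1)"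
        unfolding Y_def by (rule m_tail[OF pars(1) al sumF h1 _ ma A1' A2']) (use pars in auto)
      have en: "lambda_s d m c s \<le> v + K *
           (exp (2 * s * (- \<nu> * h^n)) * (1 / (Y - X)^2 + C) * (Y - X) + exp (2 * s * h^(n+1)) * C * (a - Y))
         \<and> RS 0 1 (\<lambda>r. r^(d-1) * exp (2 * s * m r)) c \<noteq> {}"
        unfolding K_def
        by (rule energy[OF X0 XY Ya ab(2,4) H s0 mc cc cpos' C(1) m0' msym' M1 M2 vE nrm])
      have bl: "0 < \<beta>^(n+l)" using al by simp
      have t1: "exp (2 * s * (- \<nu> * h^n)) * (1 / (Y - X)^2 + C) * (Y - X)
          = exp (- 2 * s * \<nu> * h^n) * (1/\<beta>^(n+l) + C * \<beta>^(n+l))"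
        unfolding YX using bl by (simp add: field_simps power2_eq_square)
      have t2: "exp (2 * s * h^(n+1)) * C * (a - Y) \<le> exp (2 * s * h^(n+1)) * C * (2 * \<beta>^n/(1-\<beta>))"
        using tb C(2) by (intro mult_left_mono) auto
      have up: "lambda_s d m c s < lambdaN d c a b + \<epsilon>"
      proof -
        have "lambda_s d m c s \<le> v + K * (exp (- 2 * s * \<nu> * h^n) * (1/\<beta>^(n+l) + C * \<beta>^(n+l))
            + exp (2 * s * h^(n+1)) * C * (2 * \<beta>^n/(1-\<beta>)))"
          using en t1 t2 K0 by (smt (verit) mult_left_mono)
        then show ?thesis using err v(2) by linarith
      qed
      have lo: "lambdaN d c a b \<le> lambda_s d m c s" using LB en by blast
      show "dist (lambda_s d m c s) (lambdaN d c a b) < \<epsilon>"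
        using up lo e by (simp add: dist_real_def)
    qed
  qed
qed


end
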